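(* Let $u\ge1$ and let $Z\subseteq\{0,1,\dots,u\}$ be a finite set of integers, partitioned as $Z=Z^{(1)}\cup Z^{(2)}$ with $Z^{(1)}\cap Z^{(2)}=\emptyset$. Set $\mu:=\max(Z)/u$ and assume $\mu\le1/16$. Then for every $0\le\epsilon\le1/4$, \[ \Big|\mathcal{S}\big(Z^{(1)},(1+\epsilon)\tfrac u2\big)\Big|+\Big|\mathcal{S}\big(Z^{(2)},(1+\epsilon)\tfrac u2\big)\Big|\;\le\;\frac{|\mathcal{S}(Z,u)|+1}{1-2\epsilon-4\mu}. \]
   Context: For a finite set $X$ of integers and a real $t$, $\mathcal{S}(X,t)=\{\Sigma(Y): Y\subseteq X,\ \Sigma(Y)\le t\}$, where $\Sigma(Y)=\sum_{y\in Y}y$ (so $0=\Sigma(\emptyset)\in\mathcal{S}(X,t)$ for $t\ge0$). *)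

theory Defs
  imports Complex_Main
begin

definition subsetSums :: "int set \<Rightarrow> real \<Rightarrow> int set" where
  "subsetSums X t = {\<Sum>Y | Y. Y \<subseteq> X \<and> real_of_int (\<Sum>Y) \<le> t}"

end

theory Submission imports Defs begin

lemma mem_ss: "v \<in> subsetSums X t \<longleftrightarrow> (\<exists>Y. Y \<subseteq> X \<and> v = \<Sum>Y \<and> real_of_int v \<le> t)"
  by (auto simp: subsetSums_def)

lemma ss_finite: "finite X \<Longrightarrow> finite (subsetSums X t)"
proof -
  assume "finite X"
  have "subsetSums X t \<subseteq> (\<lambda>Y. \<Sum>Y) ` Pow X" by (auto simp: subsetSums_def)
  thus ?thesis using \<open>finite X\<close> by (meson finite_Pow_iff finite_imageI finite_subset)
qed

lemma ss_zero: "0 \<le> t \<Longrightarrow> (0::int) \<in> subsetSums X t"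
  unfolding mem_ss by (rule exI[of _ "{}"]) auto

lemma ss_nonneg: "finite X \<Longrightarrow> \<forall>x\<in>X. 0 \<le> x \<Longrightarrow> v \<in> subsetSums X t \<Longrightarrow> 0 \<le> v"
  unfolding mem_ss by (auto intro!: sum_nonneg)

lemma ss_le_total: "finite X \<Longrightarrow> \<forall>x\<in>X. 0 \<le> x \<Longrightarrow> v \<in> subsetSums X t \<Longrightarrow> v \<le> \<Sum>X"
  unfolding mem_ss by (auto intro!: sum_mono2)

lemma ss_le: "v \<in> subsetSums X t \<Longrightarrow> real_of_int v \<le> t"
  unfolding mem_ss by auto

lemma ss_add:
  assumes "Z1 \<inter> Z2 = {}" "finite Z1" "finite Z2" "a \<in> subsetSums Z1 t1" "b \<in> subsetSums Z2 t2"
    "real_of_int (a + b) \<le> u"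
  shows "a + b \<in> subsetSums (Z1 \<union> Z2) u"
proof -
  obtain Y1 where Y1: "Y1 \<subseteq> Z1" "a = \<Sum>Y1" using assms(4) unfolding mem_ss by blast
  obtain Y2 where Y2: "Y2 \<subseteq> Z2" "b = \<Sum>Y2" using assms(5) unfolding mem_ss by blast
  have f: "finite Y1" "finite Y2" using Y1 Y2 assms(2,3) finite_subset by auto
  have d: "Y1 \<inter> Y2 = {}" using Y1 Y2 assms(1) by blast
  have "\<Sum>(Y1 \<union> Y2) = a + b" using sum.union_disjoint[OF f d, of "\<lambda>x. x"] Y1 Y2 by simp
  thus ?thesis unfolding mem_ss using Y1 Y2 assms(6) by (intro exI[of _ "Y1 \<union> Y2"]) auto
qed

lemma prefix:
  fixes X :: "int set" and y :: real
  assumes "finite X" "\<forall>x\<in>X. 0 \<le> x \<and> x \<le> D" "0 \<le> D" "0 \<le> y" "y \<le> real_of_int (\<Sum>X)"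
  shows "\<exists>Y\<subseteq>X. y \<le> real_of_int (\<Sum>Y) \<and> real_of_int (\<Sum>Y) \<le> y + real_of_int D"
  using assms
proof (induction X arbitrary: y rule: finite_induct)
  case empty
  then show ?case by (intro exI[of _ "{}"]) auto
next
  case (insert x F)
  show ?case
  proof (cases "y \<le> real_of_int (\<Sum>F)")
    case True
    then obtain Y where "Y \<subseteq> F" "y \<le> real_of_int (\<Sum>Y) \<and> real_of_int (\<Sum>Y) \<le> y + real_of_int D"
      using insert.IH[of y] insert.prems by auto
    then show ?thesis by (intro exI[of _ Y]) auto
  next
    case False
    have "\<Sum>(insert x F) = x + \<Sum>F" using insert by simp
    moreover have "x \<le> D" using insert by auto
    ultimately show ?thesis using False insert.prems
      by (intro exI[of _ "insert x F"]) auto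
  qed
qed

lemma path:
  fixes P Q R :: "int set"
  assumes "finite P" "P \<noteq> {}" "finite Q" "Q \<subseteq> {0<..}" "P \<union> (\<lambda>q. Max P + q) ` Q \<subseteq> R" "finite R"
  shows "card P + card Q \<le> card R"
proof -
  have d: "P \<inter> (\<lambda>q. Max P + q) ` Q = {}"
    using assms(1,2,4) Max_ge by fastforce
  have "card (P \<union> (\<lambda>q. Max P + q) ` Q) = card P + card Q"
    using card_Un_disjoint[OF assms(1) _ d] assms(3) card_image[of "\<lambda>q. Max P + q" Q]
    by (simp add: inj_on_def)
  thus ?thesis using card_mono[OF assms(6) assms(5)] by simp
qed

theorem mainTheorem6:
  fixes u :: int and Z Z1 Z2 :: "int set" and \<epsilon> :: real
  assumes "u \<ge> 1"
    and "Z \<subseteq> {0..u}" and "Z \<noteq> {}"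
    and "Z = Z1 \<union> Z2" and "Z1 \<inter> Z2 = {}"
    and "real_of_int (Max Z) / real_of_int u \<le> 1/16"
    and "0 \<le> \<epsilon>" and "\<epsilon> \<le> 1/4"
  shows "real (card (subsetSums Z1 ((1 + \<epsilon>) * real_of_int u / 2)))
           + real (card (subsetSums Z2 ((1 + \<epsilon>) * real_of_int u / 2)))
         \<le> (real (card (subsetSums Z (real_of_int u))) + 1)
           / (1 - 2 * \<epsilon> - 4 * (real_of_int (Max Z) / real_of_int u))"
proof -
  define t where "t = (1 + \<epsilon>) * real_of_int u / 2"
  define L where "L = real_of_int u - t"
  define D where "D = Max Z"
  define A where "A = subsetSums Z1 t"
  define B where "B = subsetSums Z2 t"
  define T where "T = subsetSums Z (real_of_int u)"
  define den where "den = 1 - 2 * \<epsilon> - 4 * (real_of_int (Max Z) / real_of_int u)"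
  have fZ: "finite Z" using assms(2) finite_subset by blast
  have fZ1: "finite Z1" and fZ2: "finite Z2" using fZ assms(4) by auto
  have Zb: "\<forall>x\<in>Z. 0 \<le> x \<and> x \<le> D" using assms(2) Max_ge[OF fZ] unfolding D_def by auto
  have Z1b: "\<forall>x\<in>Z1. 0 \<le> x \<and> x \<le> D" and Z2b: "\<forall>x\<in>Z2. 0 \<le> x \<and> x \<le> D"
    using Zb assms(4) by auto
  have D0: "0 \<le> D" using Zb assms(3) by force
  have u0: "real_of_int u > 0" using assms(1) by simp
  have Du: "real_of_int D \<le> real_of_int u / 16"
    using assms(6) u0 unfolding D_def by (simp add: divide_le_eq)
  have t0: "0 \<le> t" unfolding t_def using assms(7) u0 by simp
  have tu: "t \<le> real_of_int u" unfolding t_def using assms(8) u0 by simp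
  have eu: "\<epsilon> * real_of_int u \<le> real_of_int u / 4"
    using mult_right_mono[OF assms(8), of "real_of_int u"] u0 by simp
  have Leq: "L = real_of_int u/2 - \<epsilon> * real_of_int u/2" unfolding L_def t_def by (simp add: field_simps)
  have LD: "real_of_int D \<le> L" using Leq Du eu u0 by linarith
  have tL: "t + L = real_of_int u" unfolding L_def by simp
  have den_def2: "den = 1 - 2 * \<epsilon> - 4 * real_of_int D / real_of_int u"
    unfolding den_def D_def by simp
  have denpos: "den > 0"
  proof -
    have "4 * real_of_int D / real_of_int u \<le> 1/4" using Du u0 by (simp add: divide_le_eq)
    thus ?thesis unfolding den_def2 using assms(8) by simp
  qed
  have den1: "den \<le> 1"
  proof -
    have "0 \<le> 4 * real_of_int D / real_of_int u" using D0 u0 by simp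
    thus ?thesis unfolding den_def2 using assms(7) by simp
  qed
  have fA: "finite A" unfolding A_def using ss_finite[OF fZ1] .
  have fB: "finite B" unfolding B_def using ss_finite[OF fZ2] .
  have fT: "finite T" unfolding T_def using ss_finite[OF fZ] .
  have A0: "0 \<in> A" unfolding A_def using ss_zero[OF t0] .
  have B0: "0 \<in> B" unfolding B_def using ss_zero[OF t0] .
  have Anon: "\<forall>a\<in>A. 0 \<le> a" unfolding A_def using ss_nonneg[OF fZ1] Z1b by blast
  have Bnon: "\<forall>a\<in>B. 0 \<le> a" unfolding B_def using ss_nonneg[OF fZ2] Z2b by blast
  have Ale: "\<forall>a\<in>A. real_of_int a \<le> t" unfolding A_def using ss_le by blast
  have Ble: "\<forall>a\<in>B. real_of_int a \<le> t" unfolding B_def using ss_le by blast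
  have AT: "A \<subseteq> T" unfolding A_def T_def
  proof
    fix v assume "v \<in> subsetSums Z1 t"
    then obtain Y where "Y \<subseteq> Z1" "v = \<Sum>Y" "real_of_int v \<le> t" unfolding mem_ss by blast
    thus "v \<in> subsetSums Z (real_of_int u)" unfolding mem_ss using assms(4) tu
      by (intro exI[of _ Y]) auto
  qed
  have BT: "B \<subseteq> T" unfolding B_def T_def
  proof
    fix v assume "v \<in> subsetSums Z2 t"
    then obtain Y where "Y \<subseteq> Z2" "v = \<Sum>Y" "real_of_int v \<le> t" unfolding mem_ss by blast
    thus "v \<in> subsetSums Z (real_of_int u)" unfolding mem_ss using assms(4) tu
      by (intro exI[of _ Y]) auto
  qed
  have add12: "\<And>a b s1 s2. a \<in> subsetSums Z1 s1 \<Longrightarrow> b \<in> subsetSums Z2 s2 \<Longrightarrow>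
      real_of_int (a + b) \<le> real_of_int u \<Longrightarrow> a + b \<in> T"
    unfolding T_def assms(4) using ss_add[OF assms(5) fZ1 fZ2] by blast
  have key: "real (card A + card B) * den \<le> real (card T) + 1"
  proof (cases "real_of_int (\<Sum>Z2) \<le> L")
    case True
    let ?Q = "B - {0}"
    have "card A + card ?Q \<le> card T"
    proof (rule path[OF fA _ _ _ _ fT])
      show "A \<noteq> {}" using A0 by blast
      show "finite ?Q" using fB by simp
      show "?Q \<subseteq> {0<..}" using Bnon by force
      show "A \<union> (\<lambda>q. Max A + q) ` ?Q \<subseteq> T"
      proof -
        have "Max A + q \<in> T" if "q \<in> ?Q" for q
        proof -
          have mA: "Max A \<in> A" using Max_in[OF fA] A0 by blast
          have "q \<le> \<Sum>Z2" using that ss_le_total[OF fZ2] Z2b unfolding B_def by blast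
          hence "real_of_int q \<le> L" using True by linarith
          moreover have "real_of_int (Max A) \<le> t" using mA Ale by blast
          ultimately have "real_of_int (Max A + q) \<le> real_of_int u" using tL by simp
          thus ?thesis using add12 mA that unfolding A_def B_def by blast
        qed
        thus ?thesis using AT by blast
      qed
    qed
    moreover have "card ?Q = card B - 1" using B0 fB by simp
    moreover have "card B \<ge> 1" using B0 fB by (simp add: Suc_le_eq card_gt_0_iff) blast
    ultimately have "card A + card B \<le> card T + 1" by linarith
    hence "real (card A + card B) \<le> real (card T) + 1" by linarith
    moreover have "real (card A + card B) * den \<le> real (card A + card B)"
      using den1 by (simp add: mult_left_le)
    ultimately show ?thesis by linarith
  next
    case False
    define Q where "Q = {a\<in>A. 0 < a \<and> real_of_int a \<le> L}"
    define M where "M = {a\<in>A. L < real_of_int a}"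
    have fQ: "finite Q" "finite M" using fA unfolding Q_def M_def by auto
    have "card B + card Q \<le> card T"
    proof (rule path[OF fB _ fQ(1) _ _ fT])
      show "B \<noteq> {}" using B0 by blast
      show "Q \<subseteq> {0<..}" unfolding Q_def by auto
      show "B \<union> (\<lambda>q. Max B + q) ` Q \<subseteq> T"
      proof -
        have "Max B + q \<in> T" if "q \<in> Q" for q
        proof -
          have mB: "Max B \<in> B" using Max_in[OF fB] B0 by blast
          have "real_of_int q \<le> L" "q \<in> A" using that unfolding Q_def by auto
          moreover have "real_of_int (Max B) \<le> t" using mB Ble by blast
          ultimately have "real_of_int (q + Max B) \<le> real_of_int u" using tL by simp
          hence "q + Max B \<in> T" using add12 mB \<open>q \<in> A\<close> unfolding A_def B_def by blast
          thus ?thesis by (simp add: add.commute)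
        qed
        thus ?thesis using BT by blast
      qed
    qed
    moreover have "card A \<le> 1 + card Q + card M"
    proof -
      have "A \<subseteq> {0} \<union> Q \<union> M" using Anon unfolding Q_def M_def by force
      hence "card A \<le> card ({0} \<union> Q \<union> M)" using fQ by (intro card_mono) auto
      also have "\<dots> \<le> card ({0::int} \<union> Q) + card M" by (rule card_Un_le)
      also have "\<dots> \<le> 1 + card Q + card M" using card_Un_le[of "{0::int}" Q] by simp
      finally show ?thesis .
    qed
    ultimately have hN: "card A + card B \<le> card T + 1 + card M" by linarith
    show ?thesis
    proof (cases "card M = 0")
      case True
      hence "real (card A + card B) \<le> real (card T) + 1" using hN by linarith
      moreover have "real (card A + card B) * den \<le> real (card A + card B)"
        using den1 by (simp add: mult_left_le)
      ultimately show ?thesis by linarith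
    next
      case Mne: False
      hence "M \<noteq> {}" by auto
      then obtain a0 where a0: "a0 \<in> M" by blast
      have "L < t" using a0 Ale unfolding M_def by force
      moreover have "t = real_of_int u/2 + \<epsilon> * real_of_int u/2" unfolding t_def by (simp add: field_simps)
      ultimately have "\<epsilon> * real_of_int u > 0" using Leq by linarith
      hence eps0: "\<epsilon> > 0" using u0 by (simp add: zero_less_mult_iff)
      define h where "h = \<epsilon> * real_of_int u + real_of_int D"
      have "\<epsilon> * real_of_int u > 0" using eps0 u0 by simp
      hence h0: "h > 0" unfolding h_def using D0 by linarith
      define q where "q = (L - real_of_int D) / h"
      have q0: "q \<ge> 0" unfolding q_def using LD h0 by simp
      define k where "k = nat \<lfloor>q\<rfloor> + 1"
      have kq: "real k > q" unfolding k_def using q0 by linarith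
      have ik: "real i * h \<le> L - real_of_int D" if "i < k" for i
      proof -
        have "real i \<le> q" using that q0 unfolding k_def by linarith
        hence "real i * h \<le> q * h" using h0 by (simp add: mult_right_mono)
        thus ?thesis unfolding q_def using h0 by simp
      qed
      have "\<forall>i\<in>{..<k}. \<exists>Y. Y \<subseteq> Z2 \<and> real i * h \<le> real_of_int (\<Sum>Y) \<and>
              real_of_int (\<Sum>Y) \<le> real i * h + real_of_int D"
      proof
        fix i assume "i \<in> {..<k}"
        hence "real i * h \<le> L - real_of_int D" using ik by simp
        moreover have "0 \<le> real i * h" using h0 by simp
        ultimately show "\<exists>Y. Y \<subseteq> Z2 \<and> real i * h \<le> real_of_int (\<Sum>Y) \<and>
              real_of_int (\<Sum>Y) \<le> real i * h + real_of_int D"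
          using prefix[OF fZ2 Z2b D0, of "real i * h"] False D0 by auto
      qed
      then have "\<exists>Yf. \<forall>i\<in>{..<k}. Yf i \<subseteq> Z2 \<and> real i * h \<le> real_of_int (\<Sum>(Yf i)) \<and>
              real_of_int (\<Sum>(Yf i)) \<le> real i * h + real_of_int D" by (rule bchoice)
      then obtain Yf where Yf: "\<forall>i\<in>{..<k}. Yf i \<subseteq> Z2 \<and> real i * h \<le> real_of_int (\<Sum>(Yf i)) \<and>
              real_of_int (\<Sum>(Yf i)) \<le> real i * h + real_of_int D" by blast
      define b where "b i = \<Sum>(Yf i)" for i
      have bL: "real_of_int (b i) \<le> L" if "i < k" for i
        using Yf ik[OF that] that unfolding b_def by force
      have bT: "a + b i \<in> T" if "i < k" "a \<in> M" for i a
      proof -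
        have "b i \<in> subsetSums Z2 L" unfolding mem_ss b_def using Yf bL[OF that(1)] that(1)
          unfolding b_def by auto
        moreover have "a \<in> subsetSums Z1 t" using that(2) unfolding M_def A_def by auto
        moreover have "real_of_int (a + b i) \<le> real_of_int u"
          using that(2) Ale bL[OF that(1)] tL unfolding M_def by force
        ultimately show ?thesis using add12 by blast
      qed
      have disj: "((\<lambda>a. a + b i) ` M) \<inter> ((\<lambda>a. a + b j) ` M) = {}"
        if "i < j" "j < k" for i j
      proof (rule ccontr)
        assume "((\<lambda>a. a + b i) ` M) \<inter> ((\<lambda>a. a + b j) ` M) \<noteq> {}"
        then obtain a a' where aa: "a \<in> M" "a' \<in> M" "a + b i = a' + b j" by auto
        have "real_of_int (b i) \<le> real i * h + real_of_int D" using Yf that unfolding b_def by auto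
        moreover have "real j * h \<le> real_of_int (b j)" using Yf that unfolding b_def by auto
        moreover have "(real i + 1) * h \<le> real j * h" using that h0
          by (intro mult_right_mono) auto
        ultimately have "real_of_int (b j) - real_of_int (b i) \<ge> h - real_of_int D"
          by (simp add: algebra_simps)
        moreover have "real_of_int a - real_of_int a' = real_of_int (b j) - real_of_int (b i)"
          using arg_cong[OF aa(3), of real_of_int] by simp
        ultimately have "real_of_int a - real_of_int a' \<ge> \<epsilon> * real_of_int u"
          unfolding h_def by linarith
        moreover have "real_of_int a \<le> t" "L < real_of_int a'" using aa Ale unfolding M_def by auto
        moreover have "t - L = \<epsilon> * real_of_int u" unfolding L_def t_def by (simp add: algebra_simps)
        ultimately show False by linarith
      qed
      have cardU: "card (\<Union>i\<in>{..<k}. (\<lambda>a. a + b i) ` M) = k * card M"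
      proof -
        have "card (\<Union>i\<in>{..<k}. (\<lambda>a. a + b i) ` M) = (\<Sum>i\<in>{..<k}. card ((\<lambda>a. a + b i) ` M))"
        proof (rule card_UN_disjoint)
          show "finite {..<k}" by simp
          show "\<forall>i\<in>{..<k}. finite ((\<lambda>a. a + b i) ` M)" using fQ by simp
          show "\<forall>i\<in>{..<k}. \<forall>j\<in>{..<k}. i \<noteq> j \<longrightarrow> (\<lambda>a. a + b i) ` M \<inter> (\<lambda>a. a + b j) ` M = {}"
          proof (intro ballI impI)
            fix i j assume ij: "i \<in> {..<k}" "j \<in> {..<k}" "i \<noteq> j"
            show "(\<lambda>a. a + b i) ` M \<inter> (\<lambda>a. a + b j) ` M = {}"
            proof (cases "i < j")
              case True thus ?thesis using disj ij by simp
            next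
              case False hence "j < i" using ij by simp
              thus ?thesis using disj[of j i] ij by (simp add: Int_commute)
            qed
          qed
        qed
        also have "\<dots> = (\<Sum>i\<in>{..<k}. card M)"
          by (intro sum.cong refl card_image) (simp add: inj_on_def)
        finally show ?thesis by simp
      qed
      have "(\<Union>i\<in>{..<k}. (\<lambda>a. a + b i) ` M) \<subseteq> T" using bT by blast
      hence kM: "k * card M \<le> card T" using card_mono[OF fT, of "\<Union>i\<in>{..<k}. (\<lambda>a. a + b i) ` M"] cardU by simp
      have kc: "(real k + 1) * (1 - den) \<ge> 1"
      proof -
        have "(real k + 1) * h > (q + 1) * h" using kq h0 by simp
        also have "(q + 1) * h = L + \<epsilon> * real_of_int u" unfolding q_def h_def using h0
          unfolding h_def by (simp add: field_simps)
        also have "L + \<epsilon> * real_of_int u = (1 + \<epsilon>) * real_of_int u / 2"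
          unfolding L_def t_def by (simp add: field_simps)
        finally have "(real k + 1) * h > (1 + \<epsilon>) * real_of_int u / 2" .
        moreover have "0 \<le> \<epsilon> * real_of_int u" using eps0 u0 by simp
        moreover have "(1 + \<epsilon>) * real_of_int u / 2 = real_of_int u / 2 + \<epsilon> * real_of_int u / 2"
          by (simp add: field_simps)
        ultimately have "(real k + 1) * h > real_of_int u / 2" by linarith
        moreover have "(1 - den) * real_of_int u = 2 * \<epsilon> * real_of_int u + 4 * real_of_int D"
          unfolding den_def2 using u0 by (simp add: field_simps)
        moreover have "2 * h \<le> 2 * \<epsilon> * real_of_int u + 4 * real_of_int D"
          unfolding h_def using D0 by simp
        ultimately have "(real k + 1) * (2 * h) \<le> (real k + 1) * ((1 - den) * real_of_int u)"
          by (intro mult_left_mono) auto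
        hence "(real k + 1) * (1 - den) * real_of_int u > real_of_int u"
          using \<open>(real k + 1) * h > real_of_int u / 2\<close> by (simp add: algebra_simps)
        hence "((real k + 1) * (1 - den) - 1) * real_of_int u > 0" by (simp add: algebra_simps)
        hence "(real k + 1) * (1 - den) - 1 > 0" using u0 by (simp add: zero_less_mult_iff)
        thus ?thesis by simp
      qed
      define N where "N = real (card A + card B)"
      define S where "S = real (card T)"
      define m where "m = real (card M)"
      have h1: "N \<le> S + 1 + m" using hN unfolding N_def S_def m_def by linarith
      have "real (k * card M) \<le> real (card T)" using kM by (simp only: of_nat_le_iff)
      hence h2: "real k * m \<le> S" unfolding S_def m_def by simp
      have N0: "N \<ge> 0" unfolding N_def by simp
      have "N * real k \<le> (S + 1) * real k + m * real k" using h1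
        by (simp add: mult_right_mono distrib_right[symmetric])
      hence h3: "N * real k \<le> (S + 1) * (real k + 1)" using h2 by (simp add: algebra_simps)
      have "N * den * (real k + 1) = N * (real k + 1 - (real k + 1) * (1 - den))"
        by (simp add: algebra_simps)
      also have "\<dots> \<le> N * real k" using kc N0 by (intro mult_left_mono) auto
      also have "\<dots> \<le> (S + 1) * (real k + 1)" by (rule h3)
      finally have "N * den * (real k + 1) \<le> (S + 1) * (real k + 1)" .
      hence "N * den \<le> S + 1" by (rule mult_right_le_imp_le) simp
      thus ?thesis unfolding N_def S_def .
    qed
  qed
  have "real (card A) + real (card B) \<le> (real (card T) + 1) / den"
    using key denpos by (simp add: pos_le_divide_eq)
  thus ?thesis unfolding A_def B_def T_def den_def t_def .
qed

end
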